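(* In the setting described in the context, for every node $j\in V$, $v_j\ge\dfrac{\delta}{\Pr(\zeta(j)=3)}$, where $\Pr(\zeta(j)=3)=1-\delta d_j^\oplus-\delta h_j$.
   Context: An SPSC instance: finite sets $S$ (services), $V$ (nodes), $U$ (users); sizes $s_i>0$; capacities $c_j>0$; for each user $k$ a service $i_k\in S$, a set $T_k\subseteq V$, a reward $w_k>0$. Let $\{x_{ij}\},\{y_k\}$ be an optimal solution of the LP with nonnegative variables: maximize $\sum_ky_kw_k$ s.t. $y_k\le\sum_{j\in T_k}x_{i_kj}$, $y_k\le1$; $\sum_ix_{ij}s_i\le c_j$; $x_{ij}=0$ if $s_i>c_j$; $0\le x_{ij}\le1$. Let $\beta:=1/4$, $\delta:=1/4$. For $j\in V$: $P_j^\oplus:=\{i:c_j/2<s_i\le c_j\}$, $P_j^\ominus:=\{i:c_j/4<s_i\le c_j/2\}$, $d_j^\oplus:=\sum_{i\in P_j^\oplus}x_{ij}$, $d_j^\ominus:=\sum_{i\in P_j^\ominus}x_{ij}$, $v_j:=\delta c_j/\sum_{i\in S:s_i\le c_j\beta}s_ix_{ij}$, $h_j:=d_j^\ominus$ if $d_j^\ominus<2$ and $h_j:=d_j^\ominus/2$ otherwise. The random construction map $\zeta:V\to\{1,2,3\}$ has $\zeta(j)$ independent over $j$, equal to $1,2,3$ with probabilities $\delta d_j^\oplus$, $\delta h_j$, $1-\delta d_j^\oplus-\delta h_j$. *)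

theory Defs
  imports "HOL-Analysis.Analysis"
begin

text \<open>SPSC instance: services S, nodes V, users U; sizes s, capacities c;
  each user k requests service svc k, can be served by nodes T k, reward w k.\<close>

definition spsc_instance ::
  "'i set \<Rightarrow> 'v set \<Rightarrow> 'u set \<Rightarrow> ('i \<Rightarrow> real) \<Rightarrow> ('v \<Rightarrow> real) \<Rightarrow>
   ('u \<Rightarrow> 'i) \<Rightarrow> ('u \<Rightarrow> 'v set) \<Rightarrow> ('u \<Rightarrow> real) \<Rightarrow> bool" where
  "spsc_instance S V U s c svc T w \<longleftrightarrow>
     finite S \<and> finite V \<and> finite U \<and>
     (\<forall>i\<in>S. s i > 0) \<and> (\<forall>j\<in>V. c j > 0) \<and>
     (\<forall>k\<in>U. svc k \<in> S \<and> T k \<subseteq> V \<and> w k > 0)"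

definition lp_feasible ::
  "'i set \<Rightarrow> 'v set \<Rightarrow> 'u set \<Rightarrow> ('i \<Rightarrow> real) \<Rightarrow> ('v \<Rightarrow> real) \<Rightarrow>
   ('u \<Rightarrow> 'i) \<Rightarrow> ('u \<Rightarrow> 'v set) \<Rightarrow> ('i \<Rightarrow> 'v \<Rightarrow> real) \<Rightarrow> ('u \<Rightarrow> real) \<Rightarrow> bool" where
  "lp_feasible S V U s c svc T x y \<longleftrightarrow>
     (\<forall>k\<in>U. 0 \<le> y k \<and> y k \<le> 1 \<and> y k \<le> (\<Sum>j\<in>T k. x (svc k) j)) \<and>
     (\<forall>j\<in>V. (\<Sum>i\<in>S. x i j * s i) \<le> c j) \<and>
     (\<forall>i\<in>S. \<forall>j\<in>V. s i > c j \<longrightarrow> x i j = 0) \<and>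
     (\<forall>i\<in>S. \<forall>j\<in>V. 0 \<le> x i j \<and> x i j \<le> 1)"

definition lp_optimal ::
  "'i set \<Rightarrow> 'v set \<Rightarrow> 'u set \<Rightarrow> ('i \<Rightarrow> real) \<Rightarrow> ('v \<Rightarrow> real) \<Rightarrow>
   ('u \<Rightarrow> 'i) \<Rightarrow> ('u \<Rightarrow> 'v set) \<Rightarrow> ('u \<Rightarrow> real) \<Rightarrow>
   ('i \<Rightarrow> 'v \<Rightarrow> real) \<Rightarrow> ('u \<Rightarrow> real) \<Rightarrow> bool" where
  "lp_optimal S V U s c svc T w x y \<longleftrightarrow>
     lp_feasible S V U s c svc T x y \<and>
     (\<forall>x' y'. lp_feasible S V U s c svc T x' y' \<longrightarrow>
        (\<Sum>k\<in>U. y' k * w k) \<le> (\<Sum>k\<in>U. y k * w k))"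

definition beta_c :: real where "beta_c = 1/4"
definition delta_c :: real where "delta_c = 1/4"

definition d_plus :: "'i set \<Rightarrow> ('i \<Rightarrow> real) \<Rightarrow> ('v \<Rightarrow> real) \<Rightarrow> ('i \<Rightarrow> 'v \<Rightarrow> real) \<Rightarrow> 'v \<Rightarrow> real" where
  "d_plus S s c x j = (\<Sum>i\<in>{i\<in>S. c j / 2 < s i \<and> s i \<le> c j}. x i j)"

definition d_minus :: "'i set \<Rightarrow> ('i \<Rightarrow> real) \<Rightarrow> ('v \<Rightarrow> real) \<Rightarrow> ('i \<Rightarrow> 'v \<Rightarrow> real) \<Rightarrow> 'v \<Rightarrow> real" where
  "d_minus S s c x j = (\<Sum>i\<in>{i\<in>S. c j / 4 < s i \<and> s i \<le> c j / 2}. x i j)"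

definition h_val :: "'i set \<Rightarrow> ('i \<Rightarrow> real) \<Rightarrow> ('v \<Rightarrow> real) \<Rightarrow> ('i \<Rightarrow> 'v \<Rightarrow> real) \<Rightarrow> 'v \<Rightarrow> real" where
  "h_val S s c x j = (if d_minus S s c x j < 2 then d_minus S s c x j else d_minus S s c x j / 2)"

text \<open>v_j = delta c_j / (sum of s_i x_ij over small services); value +\<infinity> if the
  denominator is 0 (the paper's convention for an empty/zero denominator).\<close>
definition v_val :: "'i set \<Rightarrow> ('i \<Rightarrow> real) \<Rightarrow> ('v \<Rightarrow> real) \<Rightarrow> ('i \<Rightarrow> 'v \<Rightarrow> real) \<Rightarrow> 'v \<Rightarrow> ereal" where
  "v_val S s c x j =
     (let D = (\<Sum>i\<in>{i\<in>S. s i \<le> c j * beta_c}. s i * x i j)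
      in if D = 0 then \<infinity> else ereal (delta_c * c j / D))"

definition prob_zeta3 :: "'i set \<Rightarrow> ('i \<Rightarrow> real) \<Rightarrow> ('v \<Rightarrow> real) \<Rightarrow> ('i \<Rightarrow> 'v \<Rightarrow> real) \<Rightarrow> 'v \<Rightarrow> real" where
  "prob_zeta3 S s c x j = 1 - delta_c * d_plus S s c x j - delta_c * h_val S s c x j"

end

theory Submission
  imports Defs
begin

theorem theorem15:
  fixes S :: "'i set" and V :: "'v set" and U :: "'u set"
    and s :: "'i \<Rightarrow> real" and c :: "'v \<Rightarrow> real"
    and svc :: "'u \<Rightarrow> 'i" and T :: "'u \<Rightarrow> 'v set" and w :: "'u \<Rightarrow> real"
    and x :: "'i \<Rightarrow> 'v \<Rightarrow> real" and y :: "'u \<Rightarrow> real"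
  assumes "spsc_instance S V U s c svc T w"
    and "lp_optimal S V U s c svc T w x y"
    and "j \<in> V"
  shows "v_val S s c x j \<ge> ereal (delta_c / prob_zeta3 S s c x j)"
proof -
  have fin: "finite S" and cpos: "c j > 0" using assms(1,3) by (auto simp: spsc_instance_def)
  have feas: "lp_feasible S V U s c svc T x y" using assms(2) by (simp add: lp_optimal_def)
  have cap: "(\<Sum>i\<in>S. x i j * s i) \<le> c j" using feas assms(3) by (simp add: lp_feasible_def)
  have big0: "\<And>i. i \<in> S \<Longrightarrow> s i > c j \<Longrightarrow> x i j = 0" using feas assms(3) by (simp add: lp_feasible_def)
  have xnn: "\<And>i. i \<in> S \<Longrightarrow> 0 \<le> x i j" using feas assms(3) by (simp add: lp_feasible_def)
  define A where "A = {i\<in>S. s i \<le> c j * beta_c}"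
  define B where "B = {i\<in>S. c j / 4 < s i \<and> s i \<le> c j / 2}"
  define C where "C = {i\<in>S. c j / 2 < s i \<and> s i \<le> c j}"
  define D where "D = (\<Sum>i\<in>A. s i * x i j)"
  define dp where "dp = d_plus S s c x j"
  define dm where "dm = d_minus S s c x j"
  have dp_def': "dp = (\<Sum>i\<in>C. x i j)" unfolding dp_def d_plus_def C_def ..
  have dm_def': "dm = (\<Sum>i\<in>B. x i j)" unfolding dm_def d_minus_def B_def ..
  have split: "\<And>i. i \<in> S \<Longrightarrow> x i j * s i =
      (if i \<in> A then s i * x i j else 0) + (if i \<in> B then x i j * s i else 0)
      + (if i \<in> C then x i j * s i else 0)"
    using big0 by (auto simp: A_def B_def C_def beta_c_def)
  have "(\<Sum>i\<in>S. x i j * s i) = (\<Sum>i\<in>S. (if i \<in> A then s i * x i j else 0))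
      + (\<Sum>i\<in>S. (if i \<in> B then x i j * s i else 0)) + (\<Sum>i\<in>S. (if i \<in> C then x i j * s i else 0))"
    by (simp add: sum.distrib[symmetric] split cong: sum.cong)
  also have "\<dots> = D + (\<Sum>i\<in>B. x i j * s i) + (\<Sum>i\<in>C. x i j * s i)"
    using fin unfolding D_def by (simp add: sum.If_cases A_def B_def C_def Int_def)
  finally have eq: "(\<Sum>i\<in>S. x i j * s i) = D + (\<Sum>i\<in>B. x i j * s i) + (\<Sum>i\<in>C. x i j * s i)" .
  have "(\<Sum>i\<in>B. x i j * (c j / 4)) \<le> (\<Sum>i\<in>B. x i j * s i)"
    by (rule sum_mono) (rule mult_left_mono, auto simp: B_def intro: xnn)
  moreover have "dm * (c j / 4) = (\<Sum>i\<in>B. x i j * (c j / 4))" unfolding dm_def' by (rule sum_distrib_right)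
  ultimately have hB: "dm * (c j / 4) \<le> (\<Sum>i\<in>B. x i j * s i)" by simp
  have "(\<Sum>i\<in>C. x i j * (c j / 2)) \<le> (\<Sum>i\<in>C. x i j * s i)"
    by (rule sum_mono) (rule mult_left_mono, auto simp: C_def intro: xnn)
  moreover have "dp * (c j / 2) = (\<Sum>i\<in>C. x i j * (c j / 2))" unfolding dp_def' by (rule sum_distrib_right)
  ultimately have hC: "dp * (c j / 2) \<le> (\<Sum>i\<in>C. x i j * s i)" by simp
  have dmnn: "dm \<ge> 0" unfolding dm_def' by (rule sum_nonneg) (auto simp: B_def xnn)
  have dpnn: "dp \<ge> 0" unfolding dp_def' by (rule sum_nonneg) (auto simp: C_def xnn)
  define h where "h = h_val S s c x j"
  have h: "0 \<le> h \<and> h \<le> dm" using dmnn unfolding h_def h_val_def dm_def[symmetric] by auto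
  have P: "prob_zeta3 S s c x j = 1 - dp/4 - h/4"
    unfolding prob_zeta3_def dp_def h_def delta_c_def by simp
  have key: "D \<le> c j * (1 - dp/4 - h/4)"
  proof -
    have "D \<le> c j - dm * (c j / 4) - dp * (c j / 2)" using cap eq hB hC by linarith
    moreover have "h * c j \<le> dm * c j" using h cpos by (simp add: mult_right_mono)
    moreover have "dp * c j \<ge> 0" using dpnn cpos by simp
    ultimately show ?thesis by (simp add: algebra_simps)
  qed
  show ?thesis
  proof (cases "D = 0")
    case True
    then show ?thesis unfolding v_val_def D_def A_def by simp
  next
    case False
    have Dnn: "D \<ge> 0" unfolding D_def by (rule sum_nonneg) (auto simp: A_def xnn fin
       intro!: mult_nonneg_nonneg less_imp_le[OF assms(1)[unfolded spsc_instance_def, THEN conjunct2, THEN conjunct2, THEN conjunct2, THEN conjunct1, rule_format]])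
    hence Dp: "D > 0" using False by simp
    have Pp: "1 - dp/4 - h/4 > 0"
      using key Dp cpos by (smt (verit) mult_nonpos_nonneg zero_less_mult_pos)
    have "delta_c / (1 - dp/4 - h/4) \<le> delta_c * c j / D"
      using key Dp Pp cpos by (simp add: delta_c_def field_simps)
    then show ?thesis using False unfolding v_val_def D_def[symmetric] A_def[symmetric] P
      by (simp add: Let_def)
  qed
qed

end
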